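(* Let $x$ be a grid function with $x_s\neq0$ at every node that satisfies the scheme (S) with $\check B=\frac{2(\cos\tau-1)}{\tau^2}\,x$ (discretization for the parabolic bottom $b(x)=-x^2/2$). Then at every node $$\Big(x_t\cos t-x\,\frac{\cos\hat t-\cos t}{\tau}\Big)_{\check t}+\Big(\cos t\,\big((\hat x_s\check x_s)^{-1}-\alpha^2x_s\big)\Big)_{\bar s}=0,$$ where $t$ is the time coordinate of the node and $\hat t=t+\tau$.
   Context: Fix mesh steps $\tau>0$, $h>0$ and a constant $\alpha\in\mathbb R$. A grid function is a real-valued function $f=f(t,s)$ on the uniform orthogonal mesh $\{(n\tau,kh): n,k\in\mathbb Z\}$; at the node $(n\tau,kh)$ the symbol $t$ denotes the number $n\tau$. Shifts: $\hat f=f(t+\tau,s)$, $\check f=f(t-\tau,s)$, $f_+=f(t,s+h)$, $f_-=f(t,s-h)$; a shift applied to a composite expression shifts the whole expression, including explicit occurrences of $t$ (e.g. $\hat x_s$ is $x_s$ evaluated at $(t+\tau,s)$). Differences: $f_t=(\hat f-f)/\tau$, $f_{\check t}=(f-\check f)/\tau$, $f_s=(f_+-f)/h$, $f_{\bar s}=(f-f_-)/h$; iterated differences compose, e.g. $x_{t\check t}=(x_t)_{\check t}=(\hat x-2x+\check x)/\tau^2$ and $x_{s\bar s}=(x_s)_{\bar s}=(x_+-2x+x_-)/h^2$. Given a grid function $x$ with $x_s\neq0$ everywhere and a grid function $\check B$ (an approximation of the bottom-slope term), the scheme (S) is the requirement that at every node $$x_{t\check t}-\alpha^2x_{s\bar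 s}+\Big(\frac{1}{\hat x_s\check x_s}\Big)_{\bar s}-\check B=0 .$$ *)

theory Defs
  imports Complex_Main
begin

text \<open>Grid functions on the mesh {(n tau, k h)} are represented as functions
  of the integer indices (n, k).\<close>

type_synonym grid = "int \<Rightarrow> int \<Rightarrow> real"

definition shift_t :: "grid \<Rightarrow> grid" where
  "shift_t f = (\<lambda>n k. f (n + 1) k)"

definition shift_tb :: "grid \<Rightarrow> grid" where
  "shift_tb f = (\<lambda>n k. f (n - 1) k)"

definition diff_t :: "real \<Rightarrow> grid \<Rightarrow> grid" where
  "diff_t tau f = (\<lambda>n k. (f (n + 1) k - f n k) / tau)"

definition diff_tb :: "real \<Rightarrow> grid \<Rightarrow> grid" where
  "diff_tb tau f = (\<lambda>n k. (f n k - f (n - 1) k) / tau)"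

definition diff_s :: "real \<Rightarrow> grid \<Rightarrow> grid" where
  "diff_s h f = (\<lambda>n k. (f n (k + 1) - f n k) / h)"

definition diff_sb :: "real \<Rightarrow> grid \<Rightarrow> grid" where
  "diff_sb h f = (\<lambda>n k. (f n k - f n (k - 1)) / h)"

definition scheme_S :: "real \<Rightarrow> real \<Rightarrow> real \<Rightarrow> grid \<Rightarrow> grid \<Rightarrow> bool" where
  "scheme_S tau h alpha x Bc \<longleftrightarrow>
     (\<forall>n k. diff_tb tau (diff_t tau x) n k - alpha\<^sup>2 * diff_sb h (diff_s h x) n k
        + diff_sb h (\<lambda>n' k'. 1 / (shift_t (diff_s h x) n' k' * shift_tb (diff_s h x) n' k')) n k
        - Bc n k = 0)"

end

theory Submission
  imports Defs
begin

lemma cos_sum3: "cos ((real_of_int n + 1) * tau) + cos ((real_of_int n - 1) * tau)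
   = 2 * cos (real_of_int n * tau) * cos tau"
proof -
  have "cos ((real_of_int n + 1) * tau) = cos (real_of_int n * tau + tau)" by (simp add: algebra_simps)
  moreover have "cos ((real_of_int n - 1) * tau) = cos (real_of_int n * tau - tau)" by (simp add: algebra_simps)
  ultimately show ?thesis by (simp add: cos_add cos_diff)
qed

lemma key:
  fixes tau h c cp cm cb a x0 xp xm F G Fm Gm :: real
  assumes "tau > 0" "h > 0"
    and S: "((xp - x0)/tau - (x0 - xm)/tau)/tau - a * ((G - Gm)/h) + (F - Fm)/h - 2*(cb - 1)/tau^2 * x0 = 0"
    and C: "cp + cm = 2 * c * cb"
  shows "(((xp - x0)/tau * c - x0 * (cp - c)/tau) - ((x0 - xm)/tau * cm - xm * (c - cm)/tau))/tau
        + (c * (F - a * G) - c * (Fm - a * Gm))/h = 0"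
proof -
  have e: "(((xp - x0)/tau * c - x0 * (cp - c)/tau) - ((x0 - xm)/tau * cm - xm * (c - cm)/tau))/tau
        + (c * (F - a * G) - c * (Fm - a * Gm))/h
        = c * (((xp - x0)/tau - (x0 - xm)/tau)/tau - a * ((G - Gm)/h) + (F - Fm)/h - 2*(cb - 1)/tau^2 * x0)
          + x0 * (2*c*cb - cp - cm)/tau^2"
    using assms(1,2) by (simp add: field_simps power2_eq_square)
  show ?thesis unfolding e using S C by simp
qed

theorem mainTheorem8:
  fixes tau h alpha :: real and x :: grid
  assumes "tau > 0" and "h > 0"
    and "\<forall>n k. diff_s h x n k \<noteq> 0"
    and "scheme_S tau h alpha x (\<lambda>n k. 2 * (cos tau - 1) / tau\<^sup>2 * x n k)"
  shows "\<forall>n k.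
     diff_tb tau (\<lambda>n' k'. diff_t tau x n' k' * cos (real_of_int n' * tau)
                 - x n' k' * (cos (real_of_int (n' + 1) * tau) - cos (real_of_int n' * tau)) / tau) n k
   + diff_sb h (\<lambda>n' k'. cos (real_of_int n' * tau) *
                 (1 / (shift_t (diff_s h x) n' k' * shift_tb (diff_s h x) n' k')
                  - alpha\<^sup>2 * diff_s h x n' k')) n k = 0"
proof (intro allI)
  fix n k
  have S: "diff_tb tau (diff_t tau x) n k - alpha\<^sup>2 * diff_sb h (diff_s h x) n k
        + diff_sb h (\<lambda>n' k'. 1 / (shift_t (diff_s h x) n' k' * shift_tb (diff_s h x) n' k')) n k
        - 2 * (cos tau - 1) / tau\<^sup>2 * x n k = 0"
    using assms(4) unfolding scheme_S_def by blast
  have C: "cos (real_of_int (n+1) * tau) + cos (real_of_int (n-1) * tau)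
      = 2 * cos (real_of_int n * tau) * cos tau"
    using cos_sum3[of n tau] by simp
  show "diff_tb tau (\<lambda>n' k'. diff_t tau x n' k' * cos (real_of_int n' * tau)
                 - x n' k' * (cos (real_of_int (n' + 1) * tau) - cos (real_of_int n' * tau)) / tau) n k
   + diff_sb h (\<lambda>n' k'. cos (real_of_int n' * tau) *
                 (1 / (shift_t (diff_s h x) n' k' * shift_tb (diff_s h x) n' k')
                  - alpha\<^sup>2 * diff_s h x n' k')) n k = 0"
  proof -
    have S': "((x (n+1) k - x n k)/tau - (x n k - x (n-1) k)/tau)/tau - alpha\<^sup>2 * ((diff_s h x n k - diff_s h x n (k - 1))/h)
      + ((1 / (shift_t (diff_s h x) n k * shift_tb (diff_s h x) n k)) - (1 / (shift_t (diff_s h x) n (k-1) * shift_tb (diff_s h x) n (k-1))))/h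
      - 2*(cos tau - 1)/tau^2 * x n k = 0"
      using S unfolding diff_tb_def diff_t_def diff_sb_def
      by simp
    note K = key[OF assms(1,2) S' C]
    show ?thesis using K unfolding diff_tb_def diff_t_def diff_sb_def by (simp add: algebra_simps)
  qed
qed

end
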